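(* In $\varepsilon\tau(\mathbf{C})$ (classical logic), for every derivation $\pi$ and every critical $\varepsilon\tau$-term $e$ of $\pi$ there is a complete $e$-elimination set.
   Context: $\mathbf{C}$ is classical propositional logic. $\varepsilon\tau$-terms: $\varepsilon x\,A(x)$, $\tau x\,A(x)$. Critical formulas: $A(t)\to A(\varepsilon x\,A(x))$ (belonging to its critical term $\varepsilon x\,A(x)$) and $A(\tau x\,A(x))\to A(t)$ (belonging to $\tau x\,A(x)$). A derivation $\pi$ of $D$ in $\varepsilon\tau(\mathbf{L})$ is a derivation in the quantifier-free language with $\varepsilon\tau$-terms from a finite set of critical formulas using substitution instances of theorems of $\mathbf{L}$ and modus ponens; $e$ is a critical $\varepsilon\tau$-term of $\pi$ if some critical formula used in $\pi$ belongs to $e$. Write the critical formulas of $\pi$ as $\Gamma\cup\Lambda(e)$, $\Lambda(e)$ all those belonging to $e$, and the end formula as $D(e)$; $\Gamma[s/e]$, $D(s)$ denote replacement of every occurrence of $e$ by $s$. $\{s_1,\dots,s_k\}$ is a complete $e$-elimination set for $\pi$ if $\Gamma[s_1/e],\dots,\Gamma[s_k/e]\vdash_{\mathbf{L}}D(s_1)\lor\dots\lor D(s_k)$ (derivability from these assumptions by substitution instances of theorems of $\mathbf{L}$ and modus ponens; the assumptions need not be critical formulas). *)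

theory Defs
  imports Main
begin

text \<open>Free variables FV n; bound variables BV i are de Bruijn indices, bound by
Eps / Tau.  Eps A stands for eps x A(x), where x is the bound index 0 in A.
Alpha-equivalent terms are thus syntactically identical.\<close>

datatype trm = FV nat | BV nat | Fn nat "trm list" | Eps frm | Tau frm
and frm = Bot | Atm nat "trm list" | Conj frm frm | Disj frm frm | Imp frm frm

primrec lc_t :: "nat \<Rightarrow> trm \<Rightarrow> bool" and lc_f :: "nat \<Rightarrow> frm \<Rightarrow> bool" where
  "lc_t k (FV n) = True"
| "lc_t k (BV i) = (i < k)"
| "lc_t k (Fn f ts) = list_all (lc_t k) ts"
| "lc_t k (Eps A) = lc_f (Suc k) A"
| "lc_t k (Tau A) = lc_f (Suc k) A"
| "lc_f k Bot = True"
| "lc_f k (Atm p ts) = list_all (lc_t k) ts"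
| "lc_f k (Conj A B) = (lc_f k A \<and> lc_f k B)"
| "lc_f k (Disj A B) = (lc_f k A \<and> lc_f k B)"
| "lc_f k (Imp A B) = (lc_f k A \<and> lc_f k B)"

text \<open>Opening: instantiate bound index k by the (locally closed) term s; A(t) = open_f 0 t A.\<close>
primrec open_t :: "nat \<Rightarrow> trm \<Rightarrow> trm \<Rightarrow> trm" and open_f :: "nat \<Rightarrow> trm \<Rightarrow> frm \<Rightarrow> frm" where
  "open_t k s (FV n) = FV n"
| "open_t k s (BV i) = (if i = k then s else BV i)"
| "open_t k s (Fn f ts) = Fn f (map (open_t k s) ts)"
| "open_t k s (Eps A) = Eps (open_f (Suc k) s A)"
| "open_t k s (Tau A) = Tau (open_f (Suc k) s A)"
| "open_f k s Bot = Bot"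
| "open_f k s (Atm p ts) = Atm p (map (open_t k s) ts)"
| "open_f k s (Conj A B) = Conj (open_f k s A) (open_f k s B)"
| "open_f k s (Disj A B) = Disj (open_f k s A) (open_f k s B)"
| "open_f k s (Imp A B) = Imp (open_f k s A) (open_f k s B)"

primrec repl_t :: "trm \<Rightarrow> trm \<Rightarrow> trm \<Rightarrow> trm" and repl_f :: "trm \<Rightarrow> trm \<Rightarrow> frm \<Rightarrow> frm" where
  "repl_t e s (FV n) = (if FV n = e then s else FV n)"
| "repl_t e s (BV i) = (if BV i = e then s else BV i)"
| "repl_t e s (Fn f ts) = (if Fn f ts = e then s else Fn f (map (repl_t e s) ts))"
| "repl_t e s (Eps A) = (if Eps A = e then s else Eps (repl_f e s A))"
| "repl_t e s (Tau A) = (if Tau A = e then s else Tau (repl_f e s A))"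
| "repl_f e s Bot = Bot"
| "repl_f e s (Atm p ts) = Atm p (map (repl_t e s) ts)"
| "repl_f e s (Conj A B) = Conj (repl_f e s A) (repl_f e s B)"
| "repl_f e s (Disj A B) = Disj (repl_f e s A) (repl_f e s B)"
| "repl_f e s (Imp A B) = Imp (repl_f e s A) (repl_f e s B)"

datatype pform = PV nat | PBot | PConj pform pform | PDisj pform pform | PImp pform pform

primrec peval :: "(nat \<Rightarrow> bool) \<Rightarrow> pform \<Rightarrow> bool" where
  "peval v (PV n) = v n"
| "peval v PBot = False"
| "peval v (PConj a b) = (peval v a \<and> peval v b)"
| "peval v (PDisj a b) = (peval v a \<or> peval v b)"
| "peval v (PImp a b) = (peval v a \<longrightarrow> peval v b)"

definition C_thm :: "pform \<Rightarrow> bool" where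
  "C_thm a \<longleftrightarrow> (\<forall>v. peval v a)"

primrec pinst :: "(nat \<Rightarrow> frm) \<Rightarrow> pform \<Rightarrow> frm" where
  "pinst \<sigma> (PV n) = \<sigma> n"
| "pinst \<sigma> PBot = Bot"
| "pinst \<sigma> (PConj a b) = Conj (pinst \<sigma> a) (pinst \<sigma> b)"
| "pinst \<sigma> (PDisj a b) = Disj (pinst \<sigma> a) (pinst \<sigma> b)"
| "pinst \<sigma> (PImp a b) = Imp (pinst \<sigma> a) (pinst \<sigma> b)"

definition C_axiom :: "frm \<Rightarrow> bool" where
  "C_axiom F \<longleftrightarrow> lc_f 0 F \<and> (\<exists>a \<sigma>. C_thm a \<and> F = pinst \<sigma> a)"

inductive derives :: "frm set \<Rightarrow> frm \<Rightarrow> bool" where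
  assm: "F \<in> \<Gamma> \<Longrightarrow> derives \<Gamma> F"
| ax: "C_axiom F \<Longrightarrow> derives \<Gamma> F"
| mp: "derives \<Gamma> F \<Longrightarrow> derives \<Gamma> (Imp F G) \<Longrightarrow> derives \<Gamma> G"

definition belongs :: "frm \<Rightarrow> trm \<Rightarrow> bool" where
  "belongs F e \<longleftrightarrow>
     (\<exists>A t. e = Eps A \<and> lc_f 1 A \<and> lc_t 0 t \<and> F = Imp (open_f 0 t A) (open_f 0 e A)) \<or>
     (\<exists>A t. e = Tau A \<and> lc_f 1 A \<and> lc_t 0 t \<and> F = Imp (open_f 0 e A) (open_f 0 t A))"

definition critical :: "frm \<Rightarrow> bool" where
  "critical F \<longleftrightarrow> (\<exists>e. belongs F e)"

datatype rule = Crit | Axm | MP nat nat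

definition is_deriv :: "(frm \<times> rule) list \<Rightarrow> bool" where
  "is_deriv \<pi> \<longleftrightarrow> \<pi> \<noteq> [] \<and>
    (\<forall>i < length \<pi>. lc_f 0 (fst (\<pi>!i)) \<and>
      (case snd (\<pi>!i) of
         Crit \<Rightarrow> critical (fst (\<pi>!i))
       | Axm \<Rightarrow> C_axiom (fst (\<pi>!i))
       | MP j k \<Rightarrow> j < i \<and> k < i \<and> fst (\<pi>!k) = Imp (fst (\<pi>!j)) (fst (\<pi>!i))))"

definition crit_fmls :: "(frm \<times> rule) list \<Rightarrow> frm set" where
  "crit_fmls \<pi> = {fst (\<pi>!i) | i. i < length \<pi> \<and> snd (\<pi>!i) = Crit}"

definition end_fml :: "(frm \<times> rule) list \<Rightarrow> frm" where
  "end_fml \<pi> = fst (last \<pi>)"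

definition crit_term :: "(frm \<times> rule) list \<Rightarrow> trm \<Rightarrow> bool" where
  "crit_term \<pi> e \<longleftrightarrow> (\<exists>F \<in> crit_fmls \<pi>. belongs F e)"

definition Lam :: "(frm \<times> rule) list \<Rightarrow> trm \<Rightarrow> frm set" where
  "Lam \<pi> e = {F \<in> crit_fmls \<pi>. belongs F e}"

definition Gam :: "(frm \<times> rule) list \<Rightarrow> trm \<Rightarrow> frm set" where
  "Gam \<pi> e = crit_fmls \<pi> - Lam \<pi> e"

fun disj_list :: "frm list \<Rightarrow> frm" where
  "disj_list [] = Bot"
| "disj_list [F] = F"
| "disj_list (F # Fs) = Disj F (disj_list Fs)"

definition complete_elim_set :: "(frm \<times> rule) list \<Rightarrow> trm \<Rightarrow> trm list \<Rightarrow> bool" where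
  "complete_elim_set \<pi> e ss \<longleftrightarrow> ss \<noteq> [] \<and> (\<forall>s \<in> set ss. lc_t 0 s) \<and>
     derives (\<Union>s \<in> set ss. repl_f e s ` Gam \<pi> e)
             (disj_list (map (\<lambda>s. repl_f e s (end_fml \<pi>)) ss))"

end

theory Submission imports Defs "HOL-Library.Countable" begin

instance trm :: countable by countable_datatype
instance frm :: countable by countable_datatype

primrec st :: "trm \<Rightarrow> nat" and sf :: "frm \<Rightarrow> nat" where
  "st (FV n) = 1"
| "st (BV i) = 1"
| "st (Fn f ts) = Suc (sum_list (map st ts))"
| "st (trm.Eps A) = Suc (sf A)"
| "st (Tau A) = Suc (sf A)"
| "sf Bot = 1"
| "sf (Atm p ts) = Suc (sum_list (map st ts))"
| "sf (Conj A B) = Suc (sf A + sf B)"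
| "sf (Disj A B) = Suc (sf A + sf B)"
| "sf (Imp A B) = Suc (sf A + sf B)"

primrec ct :: "nat \<Rightarrow> trm \<Rightarrow> nat" and cf :: "nat \<Rightarrow> frm \<Rightarrow> nat" where
  "ct k (FV n) = 0"
| "ct k (BV i) = (if i = k then 1 else 0)"
| "ct k (Fn f ts) = sum_list (map (ct k) ts)"
| "ct k (trm.Eps A) = cf (Suc k) A"
| "ct k (Tau A) = cf (Suc k) A"
| "cf k Bot = 0"
| "cf k (Atm p ts) = sum_list (map (ct k) ts)"
| "cf k (Conj A B) = cf k A + cf k B"
| "cf k (Disj A B) = cf k A + cf k B"
| "cf k (Imp A B) = cf k A + cf k B"

lemma st_pos: "st u \<ge> 1" "sf F \<ge> 1"
  by (cases u; simp) (cases F; simp)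

lemma sum_list_map_add: "sum_list (map (\<lambda>x. f x + g x) xs) = sum_list (map f xs) + sum_list (map g xs :: nat list)"
  by (induct xs) (simp_all add: add_ac)

lemma sum_list_map_mult: "sum_list (map (\<lambda>x. f x * c) xs) = sum_list (map f xs) * (c::nat)"
  by (induct xs) (auto simp: algebra_simps)

lemma size_open:
  "\<forall>k. st (open_t k s u) + ct k u = st u + ct k u * st s"
  "\<forall>k. sf (open_f k s F) + cf k F = sf F + cf k F * st s"
proof (induct u and F)
  case (Fn f ts)
  have "\<And>k. sum_list (map (\<lambda>x. st (open_t k s x) + ct k x) ts) = sum_list (map (\<lambda>x. st x + ct k x * st s) ts)"
    using Fn by (intro arg_cong[where f=sum_list] map_cong) auto
  then show ?case by (simp add: sum_list_map_add sum_list_map_mult o_def)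
next
  case (Atm p ts)
  have "\<And>k. sum_list (map (\<lambda>x. st (open_t k s x) + ct k x) ts) = sum_list (map (\<lambda>x. st x + ct k x * st s) ts)"
    using Atm by (intro arg_cong[where f=sum_list] map_cong) auto
  then show ?case by (simp add: sum_list_map_add sum_list_map_mult o_def)
qed (auto simp: algebra_simps)

lemma open_zero:
  "\<forall>k. ct k u = 0 \<longrightarrow> open_t k s u = u"
  "\<forall>k. cf k F = 0 \<longrightarrow> open_f k s F = F"
proof (induct u and F)
  case (Fn f ts) then show ?case by (auto intro: map_idI)
next
  case (Atm p ts) then show ?case by (auto intro: map_idI)
qed auto

lemma repl_self: "repl_t e s e = s"
  by (cases e) auto

lemma repl_id:
  "repl_t e e u = u" "repl_f e e F = F"
  by (induct u and F) (auto intro: map_idI)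

lemma st_ge2: "ct k u > 0 \<Longrightarrow> (\<forall>i. u \<noteq> BV i) \<Longrightarrow> st u \<ge> 2"
proof (cases u)
  case (Fn f ts)
  assume "ct k u > 0"
  then have "ts \<noteq> []" using Fn by auto
  then obtain x xs where "ts = x # xs" by (cases ts) auto
  then show ?thesis using Fn st_pos(1)[of x] by simp
qed (use st_pos in \<open>auto simp: Suc_le_eq\<close>)

lemma open_neq:
  assumes "st u < st e" "\<forall>i. u \<noteq> BV i"
  shows "open_t k e u \<noteq> e"
proof (cases "ct k u = 0")
  case True
  then show ?thesis using open_zero(1) assms by auto
next
  case False
  have "st (open_t k e u) + ct k u = st u + ct k u * st e"
    using size_open(1) by blast
  moreover have "ct k u * st e \<ge> ct k u - 1 + st e"
  proof -
    obtain c where "ct k u = Suc c" using False by (cases "ct k u") auto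
    then show ?thesis using st_pos(1)[of e] by (simp add: algebra_simps)
  qed
  moreover have "st u \<ge> 2" using st_ge2 False assms(2) by blast
  ultimately have "st (open_t k e u) > st e" by linarith
  then show ?thesis by auto
qed

lemma repl_open:
  "\<forall>k. st u < st e \<longrightarrow> repl_t e s (open_t k e u) = open_t k s u"
  "\<forall>k. sf F < st e \<longrightarrow> repl_f e s (open_f k e F) = open_f k s F"
proof (induct u and F)
  case (FV x)
  then show ?case by auto
next
  case (BV x)
  then show ?case by (auto simp: repl_self)
next
  case (Fn f ts)
  show ?case
  proof (intro allI impI)
    fix k assume a: "st (Fn f ts) < st e"
    have "\<forall>x\<in>set ts. st x < st e"
      using a member_le_sum_list[of _ "map st ts"] by fastforce
    moreover have "open_t k e (Fn f ts) \<noteq> e" by (rule open_neq) (use a in auto)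
    ultimately show "repl_t e s (open_t k e (Fn f ts)) = open_t k s (Fn f ts)"
      using Fn by auto
  qed
next
  case (Eps B)
  show ?case
  proof (intro allI impI)
    fix k assume a: "st (trm.Eps B) < st e"
    have "trm.Eps (open_f (Suc k) e B) \<noteq> e"
      using open_neq[of "trm.Eps B" e k] a by auto
    then show "repl_t e s (open_t k e (trm.Eps B)) = open_t k s (trm.Eps B)"
      using Eps a by auto
  qed
next
  case (Tau B)
  show ?case
  proof (intro allI impI)
    fix k assume a: "st (Tau B) < st e"
    have "Tau (open_f (Suc k) e B) \<noteq> e"
      using open_neq[of "Tau B" e k] a by auto
    then show "repl_t e s (open_t k e (Tau B)) = open_t k s (Tau B)"
      using Tau a by auto
  qed
next
  case (Atm p ts)
  show ?case
  proof (intro allI impI)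
    fix k assume a: "sf (Atm p ts) < st e"
    have "\<forall>x\<in>set ts. st x < st e"
      using a member_le_sum_list[of _ "map st ts"] by fastforce
    then show "repl_f e s (open_f k e (Atm p ts)) = open_f k s (Atm p ts)"
      using Atm by auto
  qed
qed auto


primrec ev :: "(frm \<Rightarrow> bool) \<Rightarrow> frm \<Rightarrow> bool" where
  "ev I Bot = False"
| "ev I (Atm p ts) = I (Atm p ts)"
| "ev I (Conj A B) = (ev I A \<and> ev I B)"
| "ev I (Disj A B) = (ev I A \<or> ev I B)"
| "ev I (Imp A B) = (ev I A \<longrightarrow> ev I B)"

lemma ev_pinst: "ev I (pinst \<sigma> a) = peval (\<lambda>n. ev I (\<sigma> n)) a"
  by (induct a) auto

lemma C_axiom_ev: "C_axiom F \<Longrightarrow> ev I F"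
  unfolding C_axiom_def C_thm_def by (auto simp: ev_pinst)

primrec ab :: "frm \<Rightarrow> pform" where
  "ab Bot = PBot"
| "ab (Atm p ts) = PV (to_nat (Atm p ts))"
| "ab (Conj A B) = PConj (ab A) (ab B)"
| "ab (Disj A B) = PDisj (ab A) (ab B)"
| "ab (Imp A B) = PImp (ab A) (ab B)"

lemma pinst_ab: "pinst from_nat (ab F) = F"
  by (induct F) auto

lemma peval_ab: "peval v (ab F) = ev (\<lambda>a. v (to_nat a)) F"
  by (induct F) auto

lemma valid_axiom: "lc_f 0 F \<Longrightarrow> (\<forall>I. ev I F) \<Longrightarrow> C_axiom F"
  unfolding C_axiom_def C_thm_def
  by (metis pinst_ab peval_ab)

lemma derives_mono: "derives \<Gamma> F \<Longrightarrow> \<Gamma> \<subseteq> \<Delta> \<Longrightarrow> derives \<Delta> F"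
  by (induct rule: derives.induct) (auto intro: derives.intros)

lemma completeness:
  assumes "finite \<Gamma>"
  shows "(\<forall>G\<in>\<Gamma>. lc_f 0 G) \<Longrightarrow> lc_f 0 F \<Longrightarrow> (\<forall>I. (\<forall>G\<in>\<Gamma>. ev I G) \<longrightarrow> ev I F) \<Longrightarrow> derives \<Gamma> F"
  using assms
proof (induct \<Gamma> arbitrary: F rule: finite_induct)
  case empty
  then show ?case by (auto intro: derives.ax valid_axiom)
next
  case (insert G \<Gamma>)
  have "derives \<Gamma> (Imp G F)" using insert by (intro insert.hyps(3)) auto
  then have "derives (insert G \<Gamma>) (Imp G F)" by (rule derives_mono) auto
  moreover have "derives (insert G \<Gamma>) G" by (rule derives.assm) auto
  ultimately show ?case by (metis derives.mp)
qed

lemma ev_repl: "ev (\<lambda>a. I (repl_f e s a)) F = ev I (repl_f e s F)"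
  by (induct F) auto

lemma lc_mono: "\<forall>k m. lc_t k u \<longrightarrow> k \<le> m \<longrightarrow> lc_t m u" "\<forall>k m. lc_f k F \<longrightarrow> k \<le> m \<longrightarrow> lc_f m F"
  by (induct u and F) (auto simp: list_all_iff)

lemma lc_repl: "\<forall>k. lc_t k u \<longrightarrow> lc_t 0 s \<longrightarrow> lc_t k (repl_t e s u)"
  "\<forall>k. lc_f k F \<longrightarrow> lc_t 0 s \<longrightarrow> lc_f k (repl_f e s F)"
  by (induct u and F) (auto simp: list_all_iff dest: lc_mono(1)[rule_format])

lemma ev_disj_list: "ev I (disj_list Fs) = (\<exists>F\<in>set Fs. ev I F)"
  by (induct Fs rule: disj_list.induct) auto

lemma lc_disj_list: "\<forall>F\<in>set Fs. lc_f 0 F \<Longrightarrow> lc_f 0 (disj_list Fs)"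
  by (induct Fs rule: disj_list.induct) auto

lemma soundness:
  assumes "is_deriv \<pi>" "\<forall>F\<in>crit_fmls \<pi>. ev I F"
  shows "ev I (end_fml \<pi>)"
proof -
  have "\<forall>i<length \<pi>. ev I (fst (\<pi>!i))"
  proof (intro allI)
    fix i show "i < length \<pi> \<longrightarrow> ev I (fst (\<pi>!i))"
    proof (induct i rule: less_induct)
      case (less i)
      show ?case
      proof
        assume i: "i < length \<pi>"
        then have h: "case snd (\<pi>!i) of Crit \<Rightarrow> critical (fst (\<pi>!i))
           | Axm \<Rightarrow> C_axiom (fst (\<pi>!i))
           | MP j k \<Rightarrow> j < i \<and> k < i \<and> fst (\<pi>!k) = Imp (fst (\<pi>!j)) (fst (\<pi>!i))"
          using assms(1) unfolding is_deriv_def by auto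
        show "ev I (fst (\<pi>!i))"
        proof (cases "snd (\<pi>!i)")
          case Crit
          then have "fst (\<pi>!i) \<in> crit_fmls \<pi>" unfolding crit_fmls_def using i by auto
          then show ?thesis using assms(2) by auto
        next
          case Axm then show ?thesis using h C_axiom_ev by auto
        next
          case (MP j k)
          then have "j < i" "k < i" "fst (\<pi>!k) = Imp (fst (\<pi>!j)) (fst (\<pi>!i))" using h by auto
          then show ?thesis using less i
            by (metis ev.simps(5) order.strict_trans)
        qed
      qed
    qed
  qed
  moreover have "\<pi> \<noteq> []" using assms(1) unfolding is_deriv_def by auto
  ultimately show ?thesis unfolding end_fml_def by (simp add: last_conv_nth)
qed

lemma finite_crit: "finite (crit_fmls \<pi>)"
  unfolding crit_fmls_def by auto

lemma lc_crit: "is_deriv \<pi> \<Longrightarrow> F \<in> crit_fmls \<pi> \<Longrightarrow> lc_f 0 F"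
  unfolding crit_fmls_def is_deriv_def by auto

lemma lc_end: "is_deriv \<pi> \<Longrightarrow> lc_f 0 (end_fml \<pi>)"
  unfolding end_fml_def is_deriv_def by (auto simp: last_conv_nth)


lemma main_gen:
  fixes b :: bool and A :: frm and e :: trm and \<pi> :: "(frm \<times> rule) list"
  defines "mk \<equiv> (\<lambda>t. if b then Imp (open_f 0 t A) (open_f 0 e A) else Imp (open_f 0 e A) (open_f 0 t A))"
  assumes d: "is_deriv \<pi>" and sz: "st e = Suc (sf A)" and lce: "lc_t 0 e"
    and L: "\<forall>F\<in>Lam \<pi> e. \<exists>t. lc_t 0 t \<and> F = mk t"
  shows "\<exists>ss. complete_elim_set \<pi> e ss"
proof -
  define tf where "tf F = (SOME t. lc_t 0 t \<and> F = mk t)" for F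
  have tf: "lc_t 0 (tf F) \<and> F = mk (tf F)" if "F \<in> Lam \<pi> e" for F
    unfolding tf_def using L that by (metis (mono_tags, lifting) someI_ex)
  have finL: "finite (Lam \<pi> e)" using finite_crit unfolding Lam_def by auto
  have "\<exists>ts. set ts = tf ` Lam \<pi> e" by (rule finite_list) (rule finite_imageI[OF finL])
  then obtain ts where ts: "set ts = tf ` Lam \<pi> e" ..
  define ss where "ss = e # ts"
  have lcss: "\<forall>s\<in>set ss. lc_t 0 s"
  proof
    fix s assume "s \<in> set ss"
    then have "s = e \<or> s \<in> tf ` Lam \<pi> e" unfolding ss_def using ts by simp
    then show "lc_t 0 s"
    proof
      assume "s \<in> tf ` Lam \<pi> e"
      then obtain F where "F \<in> Lam \<pi> e" "s = tf F" by blast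
      then show ?thesis using tf by blast
    qed (use lce in simp)
  qed
  have ro: "repl_f e s (open_f 0 e A) = open_f 0 s A" for s
    using repl_open(2)[of A e s] sz by simp
  let ?G = "\<Union>s \<in> set ss. repl_f e s ` Gam \<pi> e"
  let ?D = "disj_list (map (\<lambda>s. repl_f e s (end_fml \<pi>)) ss)"
  have "derives ?G ?D"
  proof (rule completeness)
    show "finite ?G" using finite_crit[of \<pi>] unfolding Gam_def
      by (intro finite_UN_I finite_imageI) auto
    show "\<forall>G\<in>?G. lc_f 0 G"
    proof
      fix G assume "G \<in> ?G"
      then obtain s H where sH: "s \<in> set ss" "H \<in> crit_fmls \<pi>" "G = repl_f e s H"
        unfolding Gam_def by blast
      have "lc_f 0 H" using lc_crit[OF d sH(2)] .
      moreover have "lc_t 0 s" using lcss sH(1) by blast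
      ultimately show "lc_f 0 G" using sH(3) lc_repl(2) by blast
    qed
    show "lc_f 0 ?D"
    proof (rule lc_disj_list, rule ballI)
      fix G assume "G \<in> set (map (\<lambda>s. repl_f e s (end_fml \<pi>)) ss)"
      then obtain s where s: "s \<in> set ss" "G = repl_f e s (end_fml \<pi>)" by auto
      then show "lc_f 0 G" using lcss lc_end[OF d] lc_repl(2) by blast
    qed
    show "\<forall>I. (\<forall>G\<in>?G. ev I G) \<longrightarrow> ev I ?D"
    proof (intro allI impI)
      fix I assume hG: "\<forall>G\<in>?G. ev I G"
      show "ev I ?D"
      proof (rule ccontr)
        assume "\<not> ev I ?D"
        then have nD: "\<forall>s\<in>set ss. \<not> ev I (repl_f e s (end_fml \<pi>))"
          by (auto simp: ev_disj_list)
        have claim: "\<exists>F\<in>Lam \<pi> e. \<not> ev I (repl_f e s F)" if s: "s \<in> set ss" for s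
        proof (rule ccontr)
          assume "\<not> ?thesis"
          then have "\<forall>F\<in>Lam \<pi> e. ev (\<lambda>a. I (repl_f e s a)) F" by (simp add: ev_repl)
          moreover have "\<forall>F\<in>Gam \<pi> e. ev (\<lambda>a. I (repl_f e s a)) F"
            using hG s by (auto simp: ev_repl)
          ultimately have "\<forall>F\<in>crit_fmls \<pi>. ev (\<lambda>a. I (repl_f e s a)) F"
            unfolding Gam_def by blast
          then have "ev (\<lambda>a. I (repl_f e s a)) (end_fml \<pi>)" by (rule soundness[OF d])
          then show False using nD s by (simp add: ev_repl)
        qed
        obtain F where F: "F \<in> Lam \<pi> e" "\<not> ev I (repl_f e e F)"
          using claim[of e] unfolding ss_def by auto
        define t where "t = tf F"
        have tin: "t \<in> set ss" unfolding ss_def t_def using ts F by auto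
        have Ft: "F = mk t" using tf F unfolding t_def by auto
        obtain F' where F': "F' \<in> Lam \<pi> e" "\<not> ev I (repl_f e t F')"
          using claim[OF tin] by auto
        obtain t' where F't: "F' = mk t'" using tf F'(1) by blast
        show False
        proof (cases b)
          case True
          then have "ev I (open_f 0 t A)" using Ft F by (simp add: repl_id mk_def)
          moreover have "\<not> ev I (repl_f e t (open_f 0 e A))" using F't F' True by (simp add: mk_def)
          ultimately show False by (simp add: ro)
        next
          case False
          then have "\<not> ev I (open_f 0 t A)" using Ft F by (simp add: repl_id mk_def)
          moreover have "ev I (repl_f e t (open_f 0 e A))" using F't F' False by (simp add: mk_def)
          ultimately show False by (simp add: ro)
        qed
      qed
    qed
  qed
  then have "complete_elim_set \<pi> e ss"
    unfolding complete_elim_set_def using lcss ss_def by auto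
  then show ?thesis by blast
qed

theorem mainTheorem12:
  assumes "is_deriv \<pi>" and "crit_term \<pi> e"
  shows "\<exists>ss. complete_elim_set \<pi> e ss"
proof -
  obtain F0 where "belongs F0 e" using assms(2) unfolding crit_term_def by auto
  then obtain A where A: "lc_f 1 A" "e = trm.Eps A \<or> e = Tau A"
    unfolding belongs_def by auto
  show ?thesis
  proof (cases "e = trm.Eps A")
    case True
    show ?thesis
    proof (rule main_gen[where b=True and A=A])
      show "\<forall>F\<in>Lam \<pi> e. \<exists>t. lc_t 0 t \<and> F = (if True then Imp (open_f 0 t A) (open_f 0 e A) else Imp (open_f 0 e A) (open_f 0 t A))"
        using True unfolding Lam_def belongs_def by auto
    qed (use assms(1) True A(1) in simp_all)
  next
    case False
    then have E: "e = Tau A" using A by auto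
    show ?thesis
    proof (rule main_gen[where b=False and A=A])
      show "\<forall>F\<in>Lam \<pi> e. \<exists>t. lc_t 0 t \<and> F = (if False then Imp (open_f 0 t A) (open_f 0 e A) else Imp (open_f 0 e A) (open_f 0 t A))"
        using E unfolding Lam_def belongs_def by auto
    qed (use assms(1) E A(1) in simp_all)
  qed
qed

end
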